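(* Let $T$ be an ergodic probability preserving transformation of a probability space $(X,\mathcal B,m)$, let $G$ be an Abelian locally compact second countable group, and let $\varphi:X\to G$ be measurable with $T_\varphi(x,y)=(Tx,\varphi(x)+y)$ ergodic on $(X\times G,m\times m_G)$. Then there is a surjective semigroup homomorphism $\pi_\varphi:\mathcal L_\varphi\to\mathcal E_\varphi$ such that whenever $Q(x,y)=(Sx,f(x)+w(y))$ (with $S$ a commutor of $T$, $f:X\to G$ measurable, $w$ a surjective continuous endomorphism of $G$) is a commutor of $T_\varphi$, then $w=\pi_\varphi(S)$.
   Context: A commutor of a non-singular transformation $R$ is a non-singular transformation commuting with $R$. $\mathcal L_\varphi$ is the set of commutors $S$ of $T$ for which there exist a surjective continuous group endomorphism $w$ of $G$ and measurable $f:X\to G$ such that $(x,y)\mapsto(Sx,f(x)+w(y))$ is a commutor of $T_\varphi$; $\mathcal E_\varphi$ is the set of all such $w$ (both are semigroups under composition). $m_G$ is Haar measure. *)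

theory Defs
  imports "HOL-Probability.Probability"
begin

definition nonsingular :: "'a measure \<Rightarrow> ('a \<Rightarrow> 'a) \<Rightarrow> bool" where
  "nonsingular M R \<longleftrightarrow> R \<in> M \<rightarrow>\<^sub>M M \<and>
     (\<forall>A \<in> sets M. emeasure M (R -` A \<inter> space M) = 0 \<longleftrightarrow> emeasure M A = 0)"

definition measure_preserving_map :: "'a measure \<Rightarrow> ('a \<Rightarrow> 'a) \<Rightarrow> bool" where
  "measure_preserving_map M R \<longleftrightarrow> R \<in> M \<rightarrow>\<^sub>M M \<and>
     (\<forall>A \<in> sets M. emeasure M (R -` A \<inter> space M) = emeasure M A)"

definition ergodic :: "'a measure \<Rightarrow> ('a \<Rightarrow> 'a) \<Rightarrow> bool" where
  "ergodic M R \<longleftrightarrow> nonsingular M R \<and>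
     (\<forall>A \<in> sets M. R -` A \<inter> space M = A \<longrightarrow>
        emeasure M A = 0 \<or> emeasure M (space M - A) = 0)"

definition commutor :: "'a measure \<Rightarrow> ('a \<Rightarrow> 'a) \<Rightarrow> ('a \<Rightarrow> 'a) \<Rightarrow> bool" where
  "commutor M R S \<longleftrightarrow> nonsingular M S \<and> (AE x in M. S (R x) = R (S x))"

definition haar_measure :: "'g::topological_ab_group_add measure \<Rightarrow> bool" where
  "haar_measure mG \<longleftrightarrow> sets mG = sets borel \<and>
     (\<forall>g. \<forall>A \<in> sets borel. emeasure mG ((\<lambda>y. g + y) ` A) = emeasure mG A) \<and>
     (\<forall>K. compact K \<longrightarrow> emeasure mG K < \<infinity>) \<and>
     (\<forall>U. open U \<and> U \<noteq> {} \<longrightarrow> emeasure mG U > 0)"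

definition surj_cont_endo :: "('g::topological_ab_group_add \<Rightarrow> 'g) \<Rightarrow> bool" where
  "surj_cont_endo w \<longleftrightarrow> surj w \<and> continuous_on UNIV w \<and> (\<forall>x y. w (x + y) = w x + w y)"

definition skew :: "('a \<Rightarrow> 'a) \<Rightarrow> ('a \<Rightarrow> 'g::ab_group_add) \<Rightarrow> 'a \<times> 'g \<Rightarrow> 'a \<times> 'g" where
  "skew T \<phi> = (\<lambda>(x, y). (T x, \<phi> x + y))"

definition lift_map :: "('a \<Rightarrow> 'a) \<Rightarrow> ('a \<Rightarrow> 'g::ab_group_add) \<Rightarrow> ('g \<Rightarrow> 'g) \<Rightarrow> 'a \<times> 'g \<Rightarrow> 'a \<times> 'g" where
  "lift_map S f w = (\<lambda>(x, y). (S x, f x + w y))"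

definition L_set :: "'a measure \<Rightarrow> 'g::topological_ab_group_add measure \<Rightarrow> ('a \<Rightarrow> 'a) \<Rightarrow> ('a \<Rightarrow> 'g) \<Rightarrow> ('a \<Rightarrow> 'a) set" where
  "L_set M mG T \<phi> = {S. commutor M T S \<and> (\<exists>w f. surj_cont_endo w \<and> f \<in> borel_measurable M \<and>
       commutor (M \<Otimes>\<^sub>M mG) (skew T \<phi>) (lift_map S f w))}"

definition E_set :: "'a measure \<Rightarrow> 'g::topological_ab_group_add measure \<Rightarrow> ('a \<Rightarrow> 'a) \<Rightarrow> ('a \<Rightarrow> 'g) \<Rightarrow> ('g \<Rightarrow> 'g) set" where
  "E_set M mG T \<phi> = {w. surj_cont_endo w \<and> (\<exists>S f. commutor M T S \<and> f \<in> borel_measurable M \<and>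
       commutor (M \<Otimes>\<^sub>M mG) (skew T \<phi>) (lift_map S f w))}"

end

theory Submission
  imports Defs
begin

lemma ae_pull:
  assumes ns: "nonsingular N R" and ae: "AE z in N. P z"
  shows "AE z in N. P (R z)"
proof -
  from ae obtain N0 where N0: "{z\<in>space N. \<not> P z} \<subseteq> N0" "N0 \<in> sets N" "emeasure N N0 = 0"
    by (auto elim!: AE_E)
  have meas: "R \<in> N \<rightarrow>\<^sub>M N" using ns by (simp add: nonsingular_def)
  have "R -` N0 \<inter> space N \<in> sets N" using meas N0(2) by (simp add: measurable_sets)
  moreover have "emeasure N (R -` N0 \<inter> space N) = 0" using ns N0 by (simp add: nonsingular_def)
  moreover have "{z\<in>space N. \<not> P (R z)} \<subseteq> R -` N0 \<inter> space N"
    using N0(1) meas by (auto dest: measurable_space)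
  ultimately show ?thesis by (intro AE_I'[of "R -` N0 \<inter> space N"]) (auto simp: null_sets_def)
qed

lemma ae_pull_funpow:
  assumes ns: "nonsingular N R"
  shows "AE z in N. P z \<Longrightarrow> AE z in N. P ((R ^^ n) z)"
proof (induction n arbitrary: P)
  case 0 then show ?case by simp
next
  case (Suc n)
  have "AE z in N. P ((R ^^ n) z)" using Suc by blast
  then have "AE z in N. P ((R ^^ n) (R z))" by (rule ae_pull[OF ns])
  then show ?case by (simp add: funpow_Suc_right del: funpow.simps)
qed

lemma ae_inv_iter:
  assumes ns: "nonsingular N R" and inv: "AE z in N. (R z \<in> A \<longleftrightarrow> z \<in> A)"
  shows "AE z in N. ((R ^^ n) z \<in> A \<longleftrightarrow> z \<in> A)"
proof (induction n)
  case 0 then show ?case by simp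
next
  case (Suc n)
  have "AE z in N. (R ((R ^^ n) z) \<in> A \<longleftrightarrow> (R ^^ n) z \<in> A)"
    using ae_pull_funpow[OF ns inv] .
  with Suc show ?case by eventually_elim simp
qed

lemma ergodic_inv_set:
  assumes erg: "ergodic N R" and A: "A \<in> sets N"
    and inv: "AE z in N. (R z \<in> A \<longleftrightarrow> z \<in> A)"
  shows "(AE z in N. z \<in> A) \<or> (AE z in N. z \<notin> A)"
proof -
  have ns: "nonsingular N R" using erg by (simp add: ergodic_def)
  have meas: "R \<in> N \<rightarrow>\<^sub>M N" using ns by (simp add: nonsingular_def)
  have measn: "\<And>n. (R ^^ n) \<in> N \<rightarrow>\<^sub>M N" using meas by (rule measurable_compose_n)
  define A' where "A' = {z \<in> space N. \<forall>m. \<exists>n\<ge>m. (R ^^ n) z \<in> A}"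
  have A'm: "A' \<in> sets N" unfolding A'_def
    using measn A by measurable
  have shift: "(\<forall>m. \<exists>n\<ge>m. Q (Suc n)) \<longleftrightarrow> (\<forall>m. \<exists>n\<ge>m. Q n)" for Q :: "nat \<Rightarrow> bool"
  proof
    assume h: "\<forall>m. \<exists>n\<ge>m. Q (Suc n)"
    show "\<forall>m. \<exists>n\<ge>m. Q n"
    proof
      fix m obtain n where "n \<ge> m" "Q (Suc n)" using h by blast
      then show "\<exists>n\<ge>m. Q n" by (intro exI[of _ "Suc n"]) auto
    qed
  next
    assume h: "\<forall>m. \<exists>n\<ge>m. Q n"
    show "\<forall>m. \<exists>n\<ge>m. Q (Suc n)"
    proof
      fix m obtain n where "n \<ge> Suc m" "Q n" using h by blast
      then show "\<exists>n\<ge>m. Q (Suc n)" by (intro exI[of _ "n - 1"]) (cases n, auto)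
    qed
  qed
  have "R -` A' \<inter> space N = A'"
  proof -
    have "z \<in> R -` A' \<longleftrightarrow> z \<in> A'" if z: "z \<in> space N" for z
    proof -
      have "R z \<in> space N" using meas z by (auto dest: measurable_space)
      then have "z \<in> R -` A' \<longleftrightarrow> (\<forall>m. \<exists>n\<ge>m. (R ^^ Suc n) z \<in> A)"
        unfolding A'_def by (simp add: funpow_Suc_right del: funpow.simps)
      also have "\<dots> \<longleftrightarrow> (\<forall>m. \<exists>n\<ge>m. (R ^^ n) z \<in> A)" by (rule shift)
      finally show ?thesis using z unfolding A'_def by simp
    qed
    then show ?thesis unfolding A'_def by blast
  qed
  then have cases: "emeasure N A' = 0 \<or> emeasure N (space N - A') = 0"
    using erg A'm by (simp add: ergodic_def)
  have "AE z in N. \<forall>n. ((R ^^ n) z \<in> A \<longleftrightarrow> z \<in> A)"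
    using ae_inv_iter[OF ns inv] by (simp add: AE_all_countable)
  then have eq: "AE z in N. (z \<in> A' \<longleftrightarrow> z \<in> A)"
  proof (eventually_elim)
    case (elim z)
    show ?case
    proof (cases "z \<in> space N")
      case True then show ?thesis using elim unfolding A'_def by auto
    next
      case False then show ?thesis using A sets.sets_into_space A'_def by auto
    qed
  qed
  show ?thesis
  proof (cases "emeasure N A' = 0")
    case True
    then have "AE z in N. z \<notin> A'" using A'm by (intro AE_not_in) (simp add: null_sets_def)
    with eq have "AE z in N. z \<notin> A" by eventually_elim auto
    then show ?thesis by blast
  next
    case False
    then have "emeasure N (space N - A') = 0" using cases by simp
    then have "AE z in N. z \<notin> space N - A'" using A'm by (intro AE_not_in) (auto simp: null_sets_def)
    with eq AE_space have "AE z in N. z \<in> A" by eventually_elim auto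
    then show ?thesis by blast
  qed
qed


lemma borel_measurable_diff_grp[measurable (raw)]:
  fixes f g :: "'a \<Rightarrow> 'b::{second_countable_topology, topological_group_add}"
  assumes f: "f \<in> borel_measurable M"
  assumes g: "g \<in> borel_measurable M"
  shows "(\<lambda>x. f x - g x) \<in> borel_measurable M"
  using f g by (rule borel_measurable_continuous_Pair) (intro continuous_intros)

lemma basis_sep:
  fixes a b :: "'g::t2_space"
  assumes B: "topological_basis B" and h: "\<forall>U\<in>B. (a \<in> U \<longleftrightarrow> b \<in> U)"
  shows "a = b"
proof (rule ccontr)
  assume "a \<noteq> b"
  then obtain U where U: "open U" "a \<in> U" "b \<notin> U" using t1_space by blast
  then obtain V where "V \<in> B" "a \<in> V" "V \<subseteq> U" using B by (meson topological_basisE)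
  then show False using h U by blast
qed

lemma ae_exists:
  assumes "AE z in N. Q z" and "emeasure N (space N) \<noteq> 0"
  shows "\<exists>z\<in>space N. Q z"
proof (rule ccontr)
  assume nt: "\<not> (\<exists>z\<in>space N. Q z)"
  have "AE z in N. False"
    using AE_conjI[OF assms(1) AE_space] by (rule eventually_mono) (use nt in auto)
  then show False using assms(2) by (simp add: ae_filter_eq_bot_iff[symmetric] trivial_limit_def)
qed

lemma ergodic_const:
  fixes F :: "'b \<Rightarrow> 'g::{second_countable_topology, t2_space}"
  assumes erg: "ergodic N R" and Fm: "F \<in> borel_measurable N"
    and inv: "AE z in N. F (R z) = F z"
    and pos: "emeasure N (space N) \<noteq> 0"
  shows "\<exists>c. AE z in N. F z = c"
proof -
  have ns: "nonsingular N R" using erg by (simp add: ergodic_def)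
  have meas: "R \<in> N \<rightarrow>\<^sub>M N" using ns by (simp add: nonsingular_def)
  have dich: "(AE z in N. F z \<in> U) \<or> (AE z in N. F z \<notin> U)" if U: "open U" for U
  proof -
    define A where "A = F -` U \<inter> space N"
    have Am: "A \<in> sets N" unfolding A_def using Fm U by (auto intro: measurable_sets)
    have "AE z in N. (R z \<in> A \<longleftrightarrow> z \<in> A)"
      using inv AE_space
    proof eventually_elim
      case (elim z)
      then have "R z \<in> space N" using meas by (auto dest: measurable_space)
      then show ?case using elim unfolding A_def by auto
    qed
    then have "(AE z in N. z \<in> A) \<or> (AE z in N. z \<notin> A)"
      by (rule ergodic_inv_set[OF erg Am])
    then show ?thesis
    proof
      assume "AE z in N. z \<in> A"
      then have "AE z in N. F z \<in> U" by eventually_elim (auto simp: A_def)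
      then show ?thesis ..
    next
      assume "AE z in N. z \<notin> A"
      then have "AE z in N. F z \<notin> U" using AE_space by eventually_elim (auto simp: A_def)
      then show ?thesis ..
    qed
  qed
  obtain B :: "'g set set" where B: "countable B" "topological_basis B"
    using ex_countable_basis by blast
  define Pr where "Pr U \<longleftrightarrow> (AE z in N. F z \<in> U)" for U
  have "AE z in N. \<forall>U\<in>B. (F z \<in> U \<longleftrightarrow> Pr U)"
  proof (rule AE_ball_countable[THEN iffD2, OF B(1)], intro ballI)
    fix U assume "U \<in> B"
    then have "open U" using B(2) topological_basis_open by blast
    then show "AE z in N. (F z \<in> U \<longleftrightarrow> Pr U)"
    proof (cases "Pr U")
      case True then show ?thesis unfolding Pr_def by (auto elim: eventually_mono)
    next
      case False then have "AE z in N. F z \<notin> U" using dich[OF \<open>open U\<close>] unfolding Pr_def by blast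
      then show ?thesis using False by (auto elim: eventually_mono)
    qed
  qed
  note ae = this
  then obtain z0 where "z0 \<in> space N" and z0: "\<forall>U\<in>B. (F z0 \<in> U \<longleftrightarrow> Pr U)"
    using ae_exists pos by blast
  from ae have "AE z in N. F z = F z0"
    by (rule eventually_mono) (rule basis_sep[OF B(2)], use z0 in auto)
  then show ?thesis by blast
qed


lemma haar_sigma_finite:
  fixes mG :: "'g::{topological_ab_group_add, second_countable_topology, t2_space} measure"
  assumes lc: "locally_compact_space (euclidean :: 'g topology)" and H: "haar_measure mG"
  shows "sigma_finite_measure mG"
proof
  have sets: "sets mG = sets borel" using H by (simp add: haar_measure_def)
  then have sp: "space mG = UNIV" using sets_eq_imp_space_eq by fastforce
  obtain B :: "'g set set" where B: "countable B" "topological_basis B"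
    using ex_countable_basis by blast
  define C where "C = {U\<in>B. \<exists>K. compact K \<and> U \<subseteq> K}"
  have "countable C" using B(1) unfolding C_def by (rule countable_subset[rotated]) auto
  moreover have "C \<subseteq> sets mG" unfolding C_def sets using B(2) topological_basis_open by (auto intro: borel_open)
  moreover have "\<Union>C = space mG"
  proof -
    have "x \<in> \<Union>C" for x
    proof -
      have "\<forall>x::'g. \<exists>U. open U \<and> (\<exists>K. compact K \<and> x \<in> U \<and> U \<subseteq> K)"
        using lc unfolding locally_compact_space_def by simp
      then obtain U K where "open U" "compact K" "x \<in> U" "U \<subseteq> K" by blast
      then obtain V where "V \<in> B" "x \<in> V" "V \<subseteq> U" using B(2) by (meson topological_basisE)
      then show ?thesis unfolding C_def using \<open>compact K\<close> \<open>U \<subseteq> K\<close> by blast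
    qed
    then show ?thesis using sp by auto
  qed
  moreover have "\<forall>a\<in>C. emeasure mG a \<noteq> \<infinity>"
  proof
    fix a assume "a \<in> C"
    then obtain K where K: "compact K" "a \<subseteq> K" unfolding C_def by blast
    have "K \<in> sets mG" using K(1) sets by (simp add: compact_imp_closed borel_closed)
    then have "emeasure mG a \<le> emeasure mG K" using K(2) by (intro emeasure_mono)
    also have "\<dots> < \<infinity>" using H K(1) by (simp add: haar_measure_def)
    finally show "emeasure mG a \<noteq> \<infinity>" by simp
  qed
  ultimately show "\<exists>A. countable A \<and> A \<subseteq> sets mG \<and> \<Union>A = space mG \<and> (\<forall>a\<in>A. emeasure mG a \<noteq> \<infinity>)"
    by (intro exI[of _ C] conjI)
qed


lemma lift_uniq:
  fixes M :: "'a measure" and T :: "'a \<Rightarrow> 'a"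
    and mG :: "'g::{topological_ab_group_add, second_countable_topology, t2_space} measure"
    and \<phi> :: "'a \<Rightarrow> 'g"
  assumes PM: "prob_space M"
    and lc: "locally_compact_space (euclidean :: 'g topology)"
    and H: "haar_measure mG"
    and erg: "ergodic (M \<Otimes>\<^sub>M mG) (skew T \<phi>)"
    and f1m: "f1 \<in> borel_measurable M" and f2m: "f2 \<in> borel_measurable M"
    and w1: "surj_cont_endo w1" and w2: "surj_cont_endo w2"
    and c1: "commutor (M \<Otimes>\<^sub>M mG) (skew T \<phi>) (lift_map S f1 w1)"
    and c2: "commutor (M \<Otimes>\<^sub>M mG) (skew T \<phi>) (lift_map S f2 w2)"
  shows "w1 = w2"
proof -
  interpret M: prob_space M by (rule PM)
  interpret G: sigma_finite_measure mG by (rule haar_sigma_finite[OF lc H])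
  interpret P: pair_sigma_finite M mG by unfold_locales
  have sets: "sets mG = sets borel" using H by (simp add: haar_measure_def)
  then have sp: "space mG = UNIV" using sets_eq_imp_space_eq by fastforce
  let ?N = "M \<Otimes>\<^sub>M mG" and ?R = "skew T \<phi>"
  have w1c: "continuous_on UNIV w1" and w2c: "continuous_on UNIV w2"
    using w1 w2 by (auto simp: surj_cont_endo_def)
  have w1a: "w1 (x + y) = w1 x + w1 y" and w2a: "w2 (x + y) = w2 x + w2 y" for x y
    using w1 w2 by (auto simp: surj_cont_endo_def)
  have [measurable]: "w1 \<in> borel_measurable mG" "w2 \<in> borel_measurable mG"
    using borel_measurable_continuous_onI[OF w1c] borel_measurable_continuous_onI[OF w2c]
    by (simp_all add: measurable_cong_sets[OF sets refl])
  note [measurable] = f1m f2m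
  define F where "F z = (w1 (snd z) - w2 (snd z)) + (f1 (fst z) - f2 (fst z))" for z
  have Fm: "F \<in> borel_measurable ?N" unfolding F_def by measurable
  have ae1: "AE z in ?N. lift_map S f1 w1 (?R z) = ?R (lift_map S f1 w1 z)"
    using c1 by (simp add: commutor_def)
  have ae2: "AE z in ?N. lift_map S f2 w2 (?R z) = ?R (lift_map S f2 w2 z)"
    using c2 by (simp add: commutor_def)
  have inv: "AE z in ?N. F (?R z) = F z"
    using ae1 ae2
  proof eventually_elim
    case (elim z)
    obtain x y where z: "z = (x, y)" by (cases z)
    have e1: "f1 (T x) + w1 (\<phi> x + y) = \<phi> (S x) + (f1 x + w1 y)"
      using elim(1) by (simp add: z lift_map_def skew_def)
    have e2: "f2 (T x) + w2 (\<phi> x + y) = \<phi> (S x) + (f2 x + w2 y)"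
      using elim(2) by (simp add: z lift_map_def skew_def)
    have "F (?R z) = (f1 (T x) + w1 (\<phi> x + y)) - (f2 (T x) + w2 (\<phi> x + y))"
      by (simp add: F_def z skew_def algebra_simps)
    also have "\<dots> = (\<phi> (S x) + (f1 x + w1 y)) - (\<phi> (S x) + (f2 x + w2 y))"
      by (simp only: e1 e2)
    also have "\<dots> = F z" by (simp add: F_def z algebra_simps)
    finally show ?case .
  qed
  have "emeasure ?N (space M \<times> space mG) = emeasure M (space M) * emeasure mG (space mG)"
    by (intro G.emeasure_pair_measure_Times) auto
  moreover have "emeasure mG (space mG) > 0" using H sp by (simp add: haar_measure_def)
  ultimately have pos: "emeasure ?N (space ?N) \<noteq> 0"
    by (simp add: space_pair_measure M.emeasure_space_1)
  obtain c where "AE z in ?N. F z = c"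
    using ergodic_const[OF erg Fm inv pos] by blast
  then have "AE x in M. AE y in mG. F (x, y) = c" by (rule P.AE_pair)
  then have "\<exists>x\<in>space M. AE y in mG. F (x, y) = c"
    by (rule ae_exists) (simp add: M.emeasure_space_1)
  then obtain x0 where "AE y in mG. F (x0, y) = c" by blast
  define d where "d = c - (f1 x0 - f2 x0)"
  define v where "v y = w1 y - w2 y" for y
  have ae: "AE y in mG. v y = d"
    using \<open>AE y in mG. F (x0, y) = c\<close>
    by (rule eventually_mono) (simp add: F_def v_def d_def eq_diff_eq)
  have vc: "continuous_on UNIV v" unfolding v_def using w1c w2c by (intro continuous_on_diff)
  define D where "D = v -` (- {d})"
  have "open D" unfolding D_def using vc
    by (intro continuous_open_vimage open_Compl closed_singleton)
       (metis continuous_on_eq_continuous_at open_UNIV UNIV_I)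
  then have Ds: "D \<in> sets mG" using sets by (simp add: borel_open)
  have "{y \<in> space mG. \<not> v y = d} = D" unfolding D_def sp by auto
  then have "emeasure mG D = 0" using ae AE_iff_measurable[OF Ds] by simp
  moreover have "open D \<and> D \<noteq> {} \<longrightarrow> emeasure mG D > 0" using H by (simp add: haar_measure_def)
  ultimately have "D = {}" using \<open>open D\<close> by auto
  then have vd: "v y = d" for y unfolding D_def by auto
  have "w1 0 = 0" using w1a[of 0 0] by simp
  moreover have "w2 0 = 0" using w2a[of 0 0] by simp
  ultimately have "d = 0" using vd[of 0] by (simp add: v_def)
  then show ?thesis using vd by (auto simp: v_def fun_eq_iff)
qed


lemma nonsingular_comp:
  assumes n1: "nonsingular N Q1" and n2: "nonsingular N Q2"
  shows "nonsingular N (Q1 \<circ> Q2)"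
proof -
  have m1: "Q1 \<in> N \<rightarrow>\<^sub>M N" and m2: "Q2 \<in> N \<rightarrow>\<^sub>M N" using n1 n2 by (auto simp: nonsingular_def)
  have "(Q1 \<circ> Q2) \<in> N \<rightarrow>\<^sub>M N" using m1 m2 by (simp add: measurable_comp)
  moreover have "emeasure N ((Q1 \<circ> Q2) -` A \<inter> space N) = 0 \<longleftrightarrow> emeasure N A = 0"
    if A: "A \<in> sets N" for A
  proof -
    have eq: "(Q1 \<circ> Q2) -` A \<inter> space N = Q2 -` (Q1 -` A \<inter> space N) \<inter> space N"
      using m2 by (auto dest: measurable_space)
    have "Q1 -` A \<inter> space N \<in> sets N" using m1 A by (simp add: measurable_sets)
    then have h2: "emeasure N (Q2 -` (Q1 -` A \<inter> space N) \<inter> space N) = 0 \<longleftrightarrow>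
        emeasure N (Q1 -` A \<inter> space N) = 0" using n2 unfolding nonsingular_def by blast
    have h1: "emeasure N (Q1 -` A \<inter> space N) = 0 \<longleftrightarrow> emeasure N A = 0"
      using n1 A unfolding nonsingular_def by blast
    show ?thesis by (simp only: eq h2 h1)
  qed
  ultimately show ?thesis by (simp add: nonsingular_def)
qed

lemma commutor_comp:
  assumes c1: "commutor N R Q1" and c2: "commutor N R Q2"
  shows "commutor N R (Q1 \<circ> Q2)"
proof -
  have n2: "nonsingular N Q2" using c2 by (simp add: commutor_def)
  have "AE z in N. Q1 (R z) = R (Q1 z)" using c1 by (simp add: commutor_def)
  then have a1: "AE z in N. Q1 (R (Q2 z)) = R (Q1 (Q2 z))" by (rule ae_pull[OF n2])
  have a2: "AE z in N. Q2 (R z) = R (Q2 z)" using c2 by (simp add: commutor_def)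
  have "AE z in N. (Q1 \<circ> Q2) (R z) = R ((Q1 \<circ> Q2) z)" using a1 a2 by eventually_elim simp
  then show ?thesis using c1 c2 nonsingular_comp by (auto simp: commutor_def)
qed

theorem mainTheorem6:
  fixes M :: "'a measure" and T :: "'a \<Rightarrow> 'a"
    and mG :: "'g::{topological_ab_group_add, second_countable_topology, t2_space} measure"
    and \<phi> :: "'a \<Rightarrow> 'g"
  assumes "prob_space M"
    and "measure_preserving_map M T" and "ergodic M T"
    and "locally_compact_space (euclidean :: 'g topology)"
    and "haar_measure mG"
    and "\<phi> \<in> borel_measurable M"
    and "ergodic (M \<Otimes>\<^sub>M mG) (skew T \<phi>)"
  shows "\<exists>\<pi>. (\<forall>S \<in> L_set M mG T \<phi>. \<pi> S \<in> E_set M mG T \<phi>)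
           \<and> \<pi> ` L_set M mG T \<phi> = E_set M mG T \<phi>
           \<and> (\<forall>S1 \<in> L_set M mG T \<phi>. \<forall>S2 \<in> L_set M mG T \<phi>. \<pi> (S1 \<circ> S2) = \<pi> S1 \<circ> \<pi> S2)
           \<and> (\<forall>S f w. commutor M T S \<and> f \<in> borel_measurable M \<and> surj_cont_endo w \<and>
                 commutor (M \<Otimes>\<^sub>M mG) (skew T \<phi>) (lift_map S f w) \<longrightarrow> w = \<pi> S)"
proof -
  let ?N = "M \<Otimes>\<^sub>M mG" and ?R = "skew T \<phi>"
  define Good where "Good S w \<longleftrightarrow> surj_cont_endo w \<and>
      (\<exists>f. f \<in> borel_measurable M \<and> commutor ?N ?R (lift_map S f w))" for S w
  define \<pi> where "\<pi> S = (SOME w. Good S w)" for S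
  have key: "\<pi> S = w" if g: "Good S w" for S w
  proof -
    have g': "Good S (\<pi> S)" unfolding \<pi>_def using g by (rule someI[where P="Good S"])
    from g obtain f where f: "surj_cont_endo w" "f \<in> borel_measurable M" "commutor ?N ?R (lift_map S f w)"
      unfolding Good_def by blast
    from g' obtain f' where f': "surj_cont_endo (\<pi> S)" "f' \<in> borel_measurable M"
        "commutor ?N ?R (lift_map S f' (\<pi> S))"
      unfolding Good_def by blast
    show ?thesis
      by (rule lift_uniq[OF assms(1,4,5,7) f'(2) f(2) f'(1) f(1) f'(3) f(3)])
  qed
  have L: "S \<in> L_set M mG T \<phi> \<longleftrightarrow> commutor M T S \<and> (\<exists>w. Good S w)" for S
    unfolding L_set_def Good_def by blast
  have E: "w \<in> E_set M mG T \<phi> \<longleftrightarrow> (\<exists>S. commutor M T S \<and> Good S w)" for w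
    unfolding E_set_def Good_def by blast
  have p1: "\<forall>S \<in> L_set M mG T \<phi>. \<pi> S \<in> E_set M mG T \<phi>"
    using key L E by metis
  have p2: "\<pi> ` L_set M mG T \<phi> = E_set M mG T \<phi>"
  proof
    show "\<pi> ` L_set M mG T \<phi> \<subseteq> E_set M mG T \<phi>" using p1 by blast
    show "E_set M mG T \<phi> \<subseteq> \<pi> ` L_set M mG T \<phi>"
    proof
      fix w assume "w \<in> E_set M mG T \<phi>"
      then obtain S where S: "commutor M T S" "Good S w" using E by blast
      then have "S \<in> L_set M mG T \<phi>" using L by blast
      moreover have "\<pi> S = w" using key S(2) by blast
      ultimately show "w \<in> \<pi> ` L_set M mG T \<phi>" by blast
    qed
  qed
  have p3: "\<pi> (S1 \<circ> S2) = \<pi> S1 \<circ> \<pi> S2"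
    if S1: "S1 \<in> L_set M mG T \<phi>" and S2: "S2 \<in> L_set M mG T \<phi>" for S1 S2
  proof -
    obtain w1 f1 where g1: "surj_cont_endo w1" "f1 \<in> borel_measurable M"
        "commutor ?N ?R (lift_map S1 f1 w1)"
      using S1 unfolding L_set_def by blast
    obtain w2 f2 where g2: "surj_cont_endo w2" "f2 \<in> borel_measurable M"
        "commutor ?N ?R (lift_map S2 f2 w2)"
      using S2 unfolding L_set_def by blast
    have cS2: "commutor M T S2" using S2 unfolding L_set_def by blast
    then have mS2: "S2 \<in> M \<rightarrow>\<^sub>M M" by (simp add: commutor_def nonsingular_def)
    have sets: "sets mG = sets borel" using assms(5) by (simp add: haar_measure_def)
    have w1c: "continuous_on UNIV w1" and w2c: "continuous_on UNIV w2"
      and w1a: "\<And>x y. w1 (x + y) = w1 x + w1 y" and w2a: "\<And>x y. w2 (x + y) = w2 x + w2 y"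
      and sw1: "surj w1" and sw2: "surj w2"
      using g1(1) g2(1) by (auto simp: surj_cont_endo_def)
    have w1m: "w1 \<in> borel_measurable borel" using w1c by (rule borel_measurable_continuous_onI)
    define f where "f x = f1 (S2 x) + w1 (f2 x)" for x
    have fm: "f \<in> borel_measurable M" unfolding f_def
      using g1(2) g2(2) mS2 w1m by measurable
    have "surj (w1 \<circ> w2)" using sw2 sw1 by (rule comp_surj)
    moreover have "continuous_on UNIV (w1 \<circ> w2)"
      using w2c by (rule continuous_on_compose) (rule continuous_on_subset[OF w1c], simp)
    ultimately have sce: "surj_cont_endo (w1 \<circ> w2)" unfolding surj_cont_endo_def
      using w1a w2a by simp
    have "lift_map S1 f1 w1 \<circ> lift_map S2 f2 w2 = lift_map (S1 \<circ> S2) f (w1 \<circ> w2)"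
      by (auto simp: lift_map_def f_def w1a fun_eq_iff add.assoc)
    moreover have "commutor ?N ?R (lift_map S1 f1 w1 \<circ> lift_map S2 f2 w2)"
      using g1(3) g2(3) by (rule commutor_comp)
    ultimately have "Good (S1 \<circ> S2) (w1 \<circ> w2)" unfolding Good_def using sce fm by auto
    then have "\<pi> (S1 \<circ> S2) = w1 \<circ> w2" by (rule key)
    moreover have "\<pi> S1 = w1" using key g1 unfolding Good_def by blast
    moreover have "\<pi> S2 = w2" using key g2 unfolding Good_def by blast
    ultimately show ?thesis by simp
  qed
  have p4: "\<forall>S f w. commutor M T S \<and> f \<in> borel_measurable M \<and> surj_cont_endo w \<and>
                 commutor ?N ?R (lift_map S f w) \<longrightarrow> w = \<pi> S"
    using key unfolding Good_def by metis
  show ?thesis using p1 p2 p3 p4 by blast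
qed

end
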